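(* For every $i\in\mathbb{N}$ and every situation $t\in[w_i]$, \[ \overline{\mathrm{E}}_t[X_i]=\tfrac12 . \]
   Context: Fair-coin game: in rounds $n=1,2,\dots$ Skeptic announces $M_n\in\mathbb{R}$ (depending only on $x_1,\dots,x_{n-1}$), then Reality announces $x_n\in\{-1,1\}$. A situation is a finite sequence $t=x_1\cdots x_l\in\{-1,1\}^l$. A path is an infinite sequence $\xi=x_1x_2\cdots$, and $\Omega$ is the set of paths. We write $\xi_n$ for the first $n$ terms of $\xi$, and say $\xi$ goes through $t$ if $\xi_l=t$. We write $s_n:=x_1+\cdots+x_n$, with $s_0=0$. A strategy $\mathcal{P}$ assigns a bet to each situation. Its capital process is $\mathcal{K}^{\mathcal{P}}(x_1\cdots x_n)=\sum_{k=1}^n\mathcal{P}(x_1\cdots x_{k-1})x_k$, and $\mathcal{K}^{\mathcal{P}}_n(\xi):=\mathcal{K}^{\mathcal{P}}(\xi_n)$. For a function $x:\Omega\to\mathbb{R}$ and a situation $t$ of length $l$, the upper price of $x$ at $t$ is \[ \overline{\mathrm{E}}_t[x]:=\inf\bigl\{a:\ \exists\mathcal{P}\ \forall\xi \text{ through } t:\ a+\mathcal{K}^{\mathcal{P}}_n(\xi)-\mathcal{K}^{\mathcal{P}}(t)\ge x(\xi)\ \text{for all but finitely many } n\bigr\}. \] Stopping times: set $v_0:=0$, and for $i\ge1$ \[ w_i:=\min\{n>v_{i-1}: s_n=0\},\qquad v_i:=\min\{n>w_i: |s_n|>\sqrt n-1\}, \] with $\min\emptyset=\infty$. Let $[w_i]$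 be the set of situations $\xi_{w_i(\xi)}$ over paths $\xi$ with $w_i(\xi)<\infty$. Finally, $X_i(\xi):=1$ if $v_i(\xi)<\infty$ and $s_{v_i}(\xi)<0$, and $X_i(\xi):=0$ otherwise. *)

theory Defs
  imports "HOL-Analysis.Analysis"
begin

text \<open>Fair-coin game. A path is xi :: nat => int with xi k = x_(k+1) in {-1,1};
  a situation is an int list with entries in {-1,1}.\<close>

definition paths :: "(nat \<Rightarrow> int) set" where
  "paths = {\<xi>. \<forall>k. \<xi> k \<in> {-1, 1}}"

definition prefix :: "(nat \<Rightarrow> int) \<Rightarrow> nat \<Rightarrow> int list" where
  "prefix \<xi> n = map \<xi> [0..<n]"

definition through :: "(nat \<Rightarrow> int) \<Rightarrow> int list \<Rightarrow> bool" where
  "through \<xi> t \<longleftrightarrow> prefix \<xi> (length t) = t"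

definition capital :: "(int list \<Rightarrow> real) \<Rightarrow> int list \<Rightarrow> real" where
  "capital P xs = (\<Sum>k<length xs. P (take k xs) * real_of_int (xs ! k))"

definition upper_price :: "int list \<Rightarrow> ((nat \<Rightarrow> int) \<Rightarrow> real) \<Rightarrow> ereal" where
  "upper_price t x = Inf (ereal ` {a. \<exists>P. \<forall>\<xi>\<in>paths. through \<xi> t \<longrightarrow>
      (\<forall>\<^sub>F n in sequentially. a + capital P (prefix \<xi> n) - capital P t \<ge> x \<xi>)})"

definition S :: "(nat \<Rightarrow> int) \<Rightarrow> nat \<Rightarrow> int" where
  "S \<xi> n = (\<Sum>k<n. \<xi> k)"

text \<open>min {n > m. Q n}, with None standing for infinity\<close>
definition first_after :: "nat \<Rightarrow> (nat \<Rightarrow> bool) \<Rightarrow> nat option" where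
  "first_after m Q = (if \<exists>n>m. Q n then Some (LEAST n. n > m \<and> Q n) else None)"

definition zero_cond :: "(nat \<Rightarrow> int) \<Rightarrow> nat \<Rightarrow> bool" where
  "zero_cond \<xi> n \<longleftrightarrow> S \<xi> n = 0"

definition exit_cond :: "(nat \<Rightarrow> int) \<Rightarrow> nat \<Rightarrow> bool" where
  "exit_cond \<xi> n \<longleftrightarrow> \<bar>real_of_int (S \<xi> n)\<bar> > sqrt (real n) - 1"

fun vstop :: "(nat \<Rightarrow> int) \<Rightarrow> nat \<Rightarrow> nat option" where
  "vstop \<xi> 0 = Some 0"
| "vstop \<xi> (Suc i) =
     Option.bind (Option.bind (vstop \<xi> i) (\<lambda>m. first_after m (zero_cond \<xi>)))
                 (\<lambda>m. first_after m (exit_cond \<xi>))"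

text \<open>w_i for i >= 1 (w_0 is not defined in the paper; we set it to None)\<close>
definition wstop :: "(nat \<Rightarrow> int) \<Rightarrow> nat \<Rightarrow> nat option" where
  "wstop \<xi> i = (if i = 0 then None
                 else Option.bind (vstop \<xi> (i - 1)) (\<lambda>m. first_after m (zero_cond \<xi>)))"

definition wsits :: "nat \<Rightarrow> int list set" where
  "wsits i = {prefix \<xi> m | \<xi> m. \<xi> \<in> paths \<and> wstop \<xi> i = Some m}"

definition Xvar :: "nat \<Rightarrow> (nat \<Rightarrow> int) \<Rightarrow> real" where
  "Xvar i \<xi> = (case vstop \<xi> i of Some m \<Rightarrow> (if S \<xi> m < 0 then 1 else 0) | None \<Rightarrow> 0)"

end

theory Submission
  imports Defs
begin


definition Ls :: "nat \<Rightarrow> int list set" where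
  "Ls k = {xs. set xs \<subseteq> {-1,1} \<and> length xs = k}"

lemma finite_Ls: "finite (Ls k)"
  unfolding Ls_def by (rule finite_lists_length_eq) simp

lemma card_Ls: "card (Ls k) = 2^k"
  unfolding Ls_def by (subst card_lists_length_eq) (auto simp: numeral_2_eq_2)

lemma Ls_0: "Ls 0 = {[]}" unfolding Ls_def by auto

lemma sum_Ls_Suc:
  "(\<Sum>ys\<in>Ls (Suc k). f ys) = (\<Sum>ys\<in>Ls k. f ((-1)#ys) + f (1#ys))"
proof -
  have eq: "Ls (Suc k) = (\<lambda>(xs, n). n#xs) ` (Ls k \<times> {-1,1})"
    unfolding Ls_def by (rule lists_length_Suc_eq)
  have inj: "inj_on (\<lambda>(xs, n). n#xs) (Ls k \<times> {-1::int,1})"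
    by (auto simp: inj_on_def)
  have "(\<Sum>ys\<in>Ls (Suc k). f ys) = (\<Sum>p\<in>Ls k \<times> {-1,1}. f (snd p # fst p))"
    unfolding eq by (subst sum.reindex[OF inj]) (simp add: case_prod_beta)
  also have "\<dots> = (\<Sum>(ys,x)\<in>Ls k \<times> {-1::int,1}. f (x # ys))"
    by (simp add: case_prod_beta)
  also have "\<dots> = (\<Sum>ys\<in>Ls k. \<Sum>x\<in>{-1::int,1}. f (x # ys))"
    by (rule sum.cartesian_product[symmetric])
  also have "\<dots> = (\<Sum>ys\<in>Ls k. f ((-1)#ys) + f (1#ys))"
    by simp
  finally show ?thesis .
qed

lemma sum_Ls_append:
  "(\<Sum>ys\<in>Ls (a+b). f ys) = (\<Sum>ys1\<in>Ls a. \<Sum>ys2\<in>Ls b. f (ys1@ys2))"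
proof (induction a arbitrary: f)
  case 0
  then show ?case by (simp add: Ls_0)
next
  case (Suc a)
  have "(\<Sum>ys\<in>Ls (Suc a + b). f ys) = (\<Sum>ys\<in>Ls (a+b). f ((-1)#ys) + f (1#ys))"
    using sum_Ls_Suc[where k="a+b" and f=f] by simp
  also have "\<dots> = (\<Sum>ys\<in>Ls (a+b). f ((-1)#ys)) + (\<Sum>ys\<in>Ls (a+b). f (1#ys))"
    by (rule sum.distrib)
  also have "\<dots> = (\<Sum>ys1\<in>Ls a. \<Sum>ys2\<in>Ls b. f ((-1)#ys1@ys2)) + (\<Sum>ys1\<in>Ls a. \<Sum>ys2\<in>Ls b. f (1#ys1@ys2))"
    using Suc.IH[where f="\<lambda>ys. f ((-1)#ys)"] Suc.IH[where f="\<lambda>ys. f (1#ys)"] by simp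
  also have "\<dots> = (\<Sum>ys1\<in>Ls (Suc a). \<Sum>ys2\<in>Ls b. f (ys1@ys2))"
    by (subst sum_Ls_Suc) (simp add: sum.distrib)
  finally show ?case .
qed

lemma capital_snoc:
  "capital P (u@[x]) = capital P u + P u * real_of_int x"
proof -
  have "capital P (u@[x]) = (\<Sum>k<Suc (length u). P (take k (u@[x])) * real_of_int ((u@[x]) ! k))"
    unfolding capital_def by simp
  also have "\<dots> = (\<Sum>k<length u. P (take k (u@[x])) * real_of_int ((u@[x]) ! k)) + P u * real_of_int x"
    by (simp add: nth_append)
  also have "(\<Sum>k<length u. P (take k (u@[x])) * real_of_int ((u@[x]) ! k)) = capital P u"
    unfolding capital_def by (intro sum.cong) (auto simp: nth_append)
  finally show ?thesis .
qed

lemma sum_capital: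
  "(\<Sum>ys\<in>Ls k. capital P (u@ys)) = 2^k * capital P u"
proof (induction k arbitrary: u)
  case 0
  then show ?case by (simp add: Ls_0)
next
  case (Suc k)
  have "(\<Sum>ys\<in>Ls (Suc k). capital P (u@ys)) =
      (\<Sum>ys\<in>Ls k. capital P ((u@[-1])@ys)) + (\<Sum>ys\<in>Ls k. capital P ((u@[1])@ys))"
    by (subst sum_Ls_Suc) (simp add: sum.distrib)
  also have "\<dots> = 2^k * (capital P (u@[-1]) + capital P (u@[1]))"
    using Suc.IH[of "u@[-1]"] Suc.IH[of "u@[1]"] by (simp add: algebra_simps)
  also have "\<dots> = 2^Suc k * capital P u"
    by (simp add: capital_snoc)
  finally show ?case .
qed

definition V :: "(int list \<Rightarrow> real) \<Rightarrow> nat \<Rightarrow> int list \<Rightarrow> real" where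
  "V G k u = (\<Sum>ys\<in>Ls k. G (u@ys)) / 2^k"

lemma V_Suc: "V G (Suc k) u = (V G k (u@[-1]) + V G k (u@[1])) / 2"
  unfolding V_def by (subst sum_Ls_Suc) (simp add: sum.distrib add_divide_distrib)

lemma V_0: "V G 0 u = G u"
  unfolding V_def by (simp add: Ls_0)

definition rep :: "(int list \<Rightarrow> real) \<Rightarrow> nat \<Rightarrow> int list \<Rightarrow> real" where
  "rep G D u = (if length u < D then
     (V G (D - length u - 1) (u@[1]) - V G (D - length u - 1) (u@[-1])) / 2 else 0)"

lemma rep_cap:
  assumes "set ys \<subseteq> {-1,1}" "length u + length ys \<le> D"
  shows "capital (rep G D) (u@ys) - capital (rep G D) u
       = V G (D - length u - length ys) (u@ys) - V G (D - length u) u"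
  using assms
proof (induction ys rule: rev_induct)
  case Nil
  then show ?case by simp
next
  case (snoc x ys)
  define w where "w = u@ys"
  define k where "k = D - length w - 1"
  have lw: "length w < D" using snoc.prems by (simp add: w_def)
  have k1: "D - length u - length ys = Suc k" using lw by (simp add: k_def w_def)
  have k2: "D - length u - length (ys@[x]) = k" using lw by (simp add: k_def w_def)
  have IH: "capital (rep G D) w - capital (rep G D) u = V G (Suc k) w - V G (D - length u) u"
    using snoc k1 by (simp add: w_def)
  have x: "x = -1 \<or> x = 1" using snoc.prems by auto
  have "capital (rep G D) (u@ys@[x]) = capital (rep G D) w + rep G D w * real_of_int x"
    using capital_snoc[of "rep G D" w x] by (simp add: w_def)
  moreover have "rep G D w = (V G k (w@[1]) - V G k (w@[-1])) / 2"
    using lw by (simp add: rep_def k_def)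
  ultimately show ?case using IH x k2 V_Suc[of G k w]
    by (auto simp: w_def algebra_simps)
qed

lemma rep_const:
  assumes "length u \<ge> D"
  shows "capital (rep G D) (u@zs) = capital (rep G D) u"
proof (induction zs rule: rev_induct)
  case Nil
  then show ?case by simp
next
  case (snoc x zs)
  have "rep G D (u@zs) = 0" using assms by (simp add: rep_def)
  then show ?case using snoc capital_snoc[of "rep G D" "u@zs" x]
    by simp
qed




lemma length_prefix[simp]: "length (prefix \<xi> n) = n"
  by (simp add: prefix_def)

lemma take_prefix: "n \<le> N \<Longrightarrow> take n (prefix \<xi> N) = prefix \<xi> n"
  by (simp add: prefix_def take_map)

lemma S_prefix: "S \<xi> n = sum_list (prefix \<xi> n)"
  by (induction n) (simp_all add: S_def prefix_def)

lemma set_prefix: "\<xi> \<in> paths \<Longrightarrow> set (prefix \<xi> n) \<subseteq> {-1,1}"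
  by (auto simp: prefix_def paths_def)

lemma prefix_split:
  assumes "\<xi> \<in> paths" "through \<xi> t" "length t \<le> n"
  shows "prefix \<xi> n = t @ drop (length t) (prefix \<xi> n) \<and> drop (length t) (prefix \<xi> n) \<in> Ls (n - length t)"
proof -
  have "take (length t) (prefix \<xi> n) = t"
    using assms take_prefix[of "length t" n \<xi>] by (simp add: through_def)
  then have "prefix \<xi> n = t @ drop (length t) (prefix \<xi> n)"
    by (metis append_take_drop_id)
  moreover have "set (drop (length t) (prefix \<xi> n)) \<subseteq> {-1,1}"
    using set_prefix[OF assms(1)] set_drop_subset by fastforce
  ultimately show ?thesis by (simp add: Ls_def)
qed

lemma prefix_append_ex: "n \<le> N \<Longrightarrow> \<exists>zs. prefix \<xi> N = prefix \<xi> n @ zs"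
  by (metis append_take_drop_id take_prefix)

lemma first_after_Some:
  "first_after m Q = Some b \<longleftrightarrow> m < b \<and> Q b \<and> (\<forall>n. m < n \<and> n < b \<longrightarrow> \<not> Q n)"
proof
  assume h: "first_after m Q = Some b"
  then have ex: "\<exists>n>m. Q n" and b: "b = (LEAST n. n > m \<and> Q n)"
    by (auto simp: first_after_def split: if_splits)
  from ex obtain n0 where "n0 > m \<and> Q n0" by blast
  then have "m < b \<and> Q b" unfolding b by (rule LeastI)
  moreover have "\<forall>n. m < n \<and> n < b \<longrightarrow> \<not> Q n"
    using not_less_Least b by blast
  ultimately show "m < b \<and> Q b \<and> (\<forall>n. m < n \<and> n < b \<longrightarrow> \<not> Q n)" by blast
next
  assume h: "m < b \<and> Q b \<and> (\<forall>n. m < n \<and> n < b \<longrightarrow> \<not> Q n)"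
  then have "(LEAST n. n > m \<and> Q n) = b"
    by (intro Least_equality) (auto simp: not_less[symmetric])
  then show "first_after m Q = Some b"
    using h by (auto simp: first_after_def)
qed

lemma first_after_None:
  "first_after m Q = None \<longleftrightarrow> (\<forall>n>m. \<not> Q n)"
  by (auto simp: first_after_def)

lemma first_after_agree:
  assumes "first_after m Q1 = Some b" "\<And>n. n \<le> b \<Longrightarrow> Q1 n = Q2 n"
  shows "first_after m Q2 = Some b"
  using assms unfolding first_after_Some by auto

lemma S_agree:
  assumes "\<And>k. k < M \<Longrightarrow> \<xi> k = \<eta> k" "n \<le> M"
  shows "S \<xi> n = S \<eta> n"
  unfolding S_def using assms by (intro sum.cong) auto

lemma vstop_agree:
  assumes "\<And>k. k < M \<Longrightarrow> \<xi> k = \<eta> k"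
  shows "vstop \<xi> j = Some a \<Longrightarrow> a \<le> M \<Longrightarrow> vstop \<eta> j = Some a"
proof (induction j arbitrary: a)
  case 0
  then show ?case by simp
next
  case (Suc j)
  from Suc.prems obtain a0 b where h1: "vstop \<xi> j = Some a0"
    and h2: "first_after a0 (zero_cond \<xi>) = Some b"
    and h3: "first_after b (exit_cond \<xi>) = Some a"
    by (auto simp: bind_eq_Some_conv)
  have lt: "a0 < b" "b < a" using h2 h3 by (auto simp: first_after_Some)
  have "vstop \<eta> j = Some a0" using Suc.IH[of a0] h1 lt Suc.prems by simp
  moreover have "first_after a0 (zero_cond \<eta>) = Some b"
    using h2 lt Suc.prems assms
    by (intro first_after_agree[OF h2]) (simp add: zero_cond_def S_agree[OF assms])
  moreover have "first_after b (exit_cond \<eta>) = Some a"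
    using h3 lt Suc.prems assms
    by (intro first_after_agree[OF h3]) (simp add: exit_cond_def S_agree[OF assms])
  ultimately show ?case by simp
qed

lemma wstop_agree:
  assumes "\<And>k. k < M \<Longrightarrow> \<xi> k = \<eta> k" "wstop \<xi> i = Some M"
  shows "wstop \<eta> i = Some M"
proof -
  from assms(2) have i: "i \<noteq> 0" by (auto simp: wstop_def split: if_splits)
  from assms(2) i obtain a0 where h1: "vstop \<xi> (i-1) = Some a0"
    and h2: "first_after a0 (zero_cond \<xi>) = Some M"
    by (auto simp: wstop_def bind_eq_Some_conv)
  have lt: "a0 < M" using h2 by (auto simp: first_after_Some)
  have "vstop \<eta> (i-1) = Some a0" using vstop_agree[OF assms(1) h1] lt by simp
  moreover have "first_after a0 (zero_cond \<eta>) = Some M"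
    by (intro first_after_agree[OF h2]) (simp add: zero_cond_def S_agree[OF assms(1)])
  ultimately show ?thesis using i by (simp add: wstop_def)
qed

lemma through_agree:
  assumes "through \<eta> (prefix \<xi> M)"
  shows "\<And>k. k < M \<Longrightarrow> \<xi> k = \<eta> k"
proof -
  fix k assume k: "k < M"
  have "prefix \<eta> M = prefix \<xi> M" using assms by (simp add: through_def)
  then have "prefix \<eta> M ! k = prefix \<xi> M ! k" by simp
  then show "\<xi> k = \<eta> k" using k by (simp add: prefix_def)
qed

lemma wsits_setting:
  assumes "i \<ge> 1" "t \<in> wsits i"
  shows "set t \<subseteq> {-1,1}" "sum_list t = 0"
    "\<And>\<eta>. \<eta> \<in> paths \<Longrightarrow> through \<eta> t \<Longrightarrow> vstop \<eta> i = first_after (length t) (exit_cond \<eta>)"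
proof -
  from assms(2) obtain \<xi> M where xi: "\<xi> \<in> paths" "wstop \<xi> i = Some M" and t: "t = prefix \<xi> M"
    by (auto simp: wsits_def)
  show "set t \<subseteq> {-1,1}" using t set_prefix[OF xi(1)] by simp
  from xi(2) assms(1) obtain a0 where "first_after a0 (zero_cond \<xi>) = Some M"
    by (auto simp: wstop_def bind_eq_Some_conv)
  then have "zero_cond \<xi> M" by (simp add: first_after_Some)
  then show "sum_list t = 0" by (simp add: zero_cond_def S_prefix t)
  fix \<eta> assume "\<eta> \<in> paths" "through \<eta> t"
  then have agree: "\<And>k. k < M \<Longrightarrow> \<xi> k = \<eta> k" using through_agree t by blast
  have "wstop \<eta> i = Some M"
    using wstop_agree[OF agree xi(2)] by blast
  then have "Option.bind (vstop \<eta> (i-1)) (\<lambda>m. first_after m (zero_cond \<eta>)) = Some M"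
    using assms(1) by (simp add: wstop_def)
  moreover have "vstop \<eta> i = Option.bind (Option.bind (vstop \<eta> (i-1)) (\<lambda>m. first_after m (zero_cond \<eta>))) (\<lambda>m. first_after m (exit_cond \<eta>))"
    using assms(1) by (metis Suc_diff_1 less_eq_Suc_le vstop.simps(2) One_nat_def)
  ultimately show "vstop \<eta> i = first_after (length t) (exit_cond \<eta>)" using t by simp
qed




definition exl :: "int list \<Rightarrow> nat \<Rightarrow> bool" where
  "exl w n \<longleftrightarrow> \<bar>real_of_int (sum_list (take n w))\<bar> > sqrt (real n) - 1"

definition fe :: "nat \<Rightarrow> int list \<Rightarrow> nat option" where
  "fe l w = first_after l (\<lambda>n. n \<le> length w \<and> exl w n)"

definition GG :: "nat \<Rightarrow> int list \<Rightarrow> real" where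
  "GG l w = (case fe l w of None \<Rightarrow> 1 | Some n \<Rightarrow> (if sum_list (take n w) < 0 then 1 else 0))"

definition HH :: "nat \<Rightarrow> int list \<Rightarrow> real" where
  "HH l w = (case fe l w of None \<Rightarrow> 1 | Some n \<Rightarrow> (if sum_list (take n w) > 0 then 1 else 0))"

lemma fe_path:
  assumes "prefix \<eta> (length w) = w" "fe l w = Some n"
  shows "first_after l (exit_cond \<eta>) = Some n" "S \<eta> n = sum_list (take n w)"
proof -
  have nl: "n \<le> length w" using assms(2) by (simp add: fe_def first_after_Some)
  have eq: "S \<eta> k = sum_list (take k w)" if "k \<le> length w" for k
    using that assms(1) take_prefix[of k "length w" \<eta>] by (simp add: S_prefix)
  show "first_after l (exit_cond \<eta>) = Some n"
    using assms(2) unfolding fe_def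
    by (rule first_after_agree) (use nl eq in \<open>auto simp: exl_def exit_cond_def\<close>)
  show "S \<eta> n = sum_list (take n w)" using eq nl by simp
qed

lemma Xvar_le1: "Xvar i \<eta> \<le> 1" and Xvar_ge0: "Xvar i \<eta> \<ge> 0"
  by (auto simp: Xvar_def split: option.splits)

lemma Xvar_GG:
  assumes "i \<ge> 1" "t \<in> wsits i" "\<eta> \<in> paths" "through \<eta> t"
    "prefix \<eta> (length w) = w" "fe (length t) w = Some n"
  shows "Xvar i \<eta> = GG (length t) w"
  using wsits_setting(3)[OF assms(1-4)] fe_path[OF assms(5,6)] assms(6)
  by (simp add: Xvar_def GG_def)

lemma Xvar_le_GG:
  assumes "i \<ge> 1" "t \<in> wsits i" "\<eta> \<in> paths" "through \<eta> t"
    "prefix \<eta> (length w) = w"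
  shows "Xvar i \<eta> \<le> GG (length t) w"
proof (cases "fe (length t) w")
  case None
  then show ?thesis using Xvar_le1 by (simp add: GG_def)
next
  case (Some n)
  then show ?thesis using Xvar_GG[OF assms Some] by simp
qed

lemma sum_list_uminus: "sum_list (map uminus (xs::int list)) = - sum_list xs"
  by (induction xs) auto

lemma sum_take_append_neg:
  fixes t ys :: "int list"
  shows
  "sum_list (take n (t @ map uminus ys)) = sum_list (take n t) - sum_list (take (n - length t) ys)"
  "sum_list (take n (t @ ys)) = sum_list (take n t) + sum_list (take (n - length t) ys)"
  by (simp_all add: take_map sum_list_uminus)

lemma sum_take_t:
  fixes t ys :: "int list"
  assumes "sum_list t = 0"
  shows "sum_list (take n t) = 0 \<or> sum_list (take (n - length t) ys) = 0"
proof (cases "n \<le> length t")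
  case True then show ?thesis by simp
next
  case False then show ?thesis using assms by simp
qed

lemma abs_sum_neg:
  fixes t ys :: "int list"
  assumes "sum_list t = 0"
  shows "\<bar>sum_list (take n (t @ map uminus ys))\<bar> = \<bar>sum_list (take n (t @ ys))\<bar>"
  using sum_take_t[OF assms, of n ys] unfolding sum_take_append_neg by (auto simp: take_map sum_list_uminus)

lemma sum_neg_after:
  fixes t ys :: "int list"
  assumes "sum_list t = 0" "n \<ge> length t"
  shows "sum_list (take n (t @ map uminus ys)) = - sum_list (take n (t @ ys))"
  using assms unfolding sum_take_append_neg by (simp add: take_map sum_list_uminus)

lemma fe_neg:
  assumes "sum_list t = 0"
  shows "fe (length t) (t @ map uminus ys) = fe (length t) (t @ ys)"
proof -
  have "(\<lambda>n. n \<le> length (t @ map uminus ys) \<and> exl (t @ map uminus ys) n) =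
        (\<lambda>n. n \<le> length (t @ ys) \<and> exl (t @ ys) n)"
  proof (intro ext)
    fix n
    have "\<bar>real_of_int (sum_list (take n (t @ map uminus ys)))\<bar> = \<bar>real_of_int (sum_list (take n (t @ ys)))\<bar>"
      using abs_sum_neg[OF assms, of n ys] by (metis of_int_abs)
    then show "(n \<le> length (t @ map uminus ys) \<and> exl (t @ map uminus ys) n) =
        (n \<le> length (t @ ys) \<and> exl (t @ ys) n)"
      unfolding exl_def by simp
  qed
  then show ?thesis by (simp add: fe_def)
qed

lemma HH_neg:
  assumes "sum_list t = 0"
  shows "HH (length t) (t @ map uminus ys) = GG (length t) (t @ ys)"
proof (cases "fe (length t) (t @ ys)")
  case None
  then show ?thesis using fe_neg[OF assms] by (simp add: HH_def GG_def)
next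
  case (Some n)
  then have "n > length t" by (simp add: fe_def first_after_Some)
  then show ?thesis using Some fe_neg[OF assms] sum_neg_after[OF assms, of n ys]
    by (simp add: HH_def GG_def)
qed

lemma GG_HH:
  "GG l w + HH l w = 1 + (if fe l w = None then 1 else 0)"
proof (cases "fe l w")
  case None
  then show ?thesis by (simp add: HH_def GG_def)
next
  case (Some n)
  then have "n > l" "exl w n" by (auto simp: fe_def first_after_Some)
  then have "sqrt (real n) \<ge> 1" by simp
  then have "sum_list (take n w) \<noteq> 0" using \<open>exl w n\<close> by (auto simp: exl_def)
  then show ?thesis using Some by (auto simp: HH_def GG_def)
qed

definition cnt :: "int list \<Rightarrow> nat \<Rightarrow> real" where
  "cnt t N = (\<Sum>ys\<in>Ls N. if fe (length t) (t@ys) = None then 1 else 0)"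

lemma sum_GG:
  assumes "sum_list t = 0"
  shows "2 * (\<Sum>ys\<in>Ls N. GG (length t) (t@ys)) = 2^N + cnt t N"
proof -
  have "(\<Sum>ys\<in>Ls N. HH (length t) (t@ys)) = (\<Sum>ys\<in>Ls N. HH (length t) (t@ map uminus ys))"
    by (rule sum.reindex_bij_witness[of _ "map uminus" "map uminus"]) (auto simp: Ls_def)
  also have "\<dots> = (\<Sum>ys\<in>Ls N. GG (length t) (t@ys))"
    using HH_neg[OF assms] by simp
  finally have "2 * (\<Sum>ys\<in>Ls N. GG (length t) (t@ys)) =
      (\<Sum>ys\<in>Ls N. GG (length t) (t@ys) + HH (length t) (t@ys))"
    by (simp add: sum.distrib)
  also have "\<dots> = (\<Sum>ys\<in>Ls N. 1 + (if fe (length t) (t@ys) = None then 1 else 0))"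
    using GG_HH by simp
  also have "\<dots> = 2^N + cnt t N"
    by (simp add: sum.distrib cnt_def card_Ls)
  finally show ?thesis .
qed




primrec gr :: "(int list \<Rightarrow> real) \<Rightarrow> int list \<Rightarrow> nat \<Rightarrow> int list" where
  "gr P u 0 = u"
| "gr P u (Suc k) = gr P u k @ [if P (gr P u k) > 0 then -1 else 1]"

lemma length_gr[simp]: "length (gr P u k) = length u + k"
  by (induction k) auto

lemma gr_prefix: "take (length u + k) (gr P u (k+d)) = gr P u k"
  by (induction d) auto

lemma set_gr: "set u \<subseteq> {-1,1} \<Longrightarrow> set (gr P u k) \<subseteq> {-1,1}"
  by (induction k) auto

lemma cap_gr: "capital P (gr P u k) \<le> capital P u"
proof (induction k)
  case 0
  then show ?case by simp
next
  case (Suc k)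
  have "P (gr P u k) * real_of_int (if P (gr P u k) > 0 then -1 else 1) \<le> 0"
    by auto
  then show ?case using Suc capital_snoc[of P "gr P u k"] by simp
qed

definition gpath :: "(int list \<Rightarrow> real) \<Rightarrow> int list \<Rightarrow> nat \<Rightarrow> int" where
  "gpath P u j = gr P u (Suc j) ! j"

lemma gr_nth: "j < length u + k \<Longrightarrow> gr P u k ! j = gr P u (Suc j) ! j"
proof (cases "Suc j \<le> k")
  case True
  assume j: "j < length u + k"
  have "take (length u + Suc j) (gr P u (Suc j + (k - Suc j))) = gr P u (Suc j)"
    by (rule gr_prefix)
  then have "take (length u + Suc j) (gr P u k) = gr P u (Suc j)" using True by simp
  then show ?thesis by (metis lessI less_add_Suc2 nth_take add_Suc_right)
next
  case False
  assume j: "j < length u + k"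
  have "take (length u + k) (gr P u (k + (Suc j - k))) = gr P u k"
    by (rule gr_prefix)
  then have "take (length u + k) (gr P u (Suc j)) = gr P u k" using False by simp
  then show ?thesis using j by (metis nth_take)
qed

lemma prefix_gpath: "prefix (gpath P u) (length u + k) = gr P u k"
  by (rule nth_equalityI) (auto simp: prefix_def gpath_def gr_nth)

lemma gpath_paths: "set u \<subseteq> {-1,1} \<Longrightarrow> gpath P u \<in> paths"
proof -
  assume u: "set u \<subseteq> {-1,1}"
  have "gpath P u j \<in> {-1,1}" for j
  proof -
    have "gpath P u j \<in> set (gr P u (Suc j))" unfolding gpath_def by (rule nth_mem) simp
    then show ?thesis using set_gr[OF u] by blast
  qed
  then show ?thesis by (simp add: paths_def)
qed

lemma lower_bd:
  assumes i: "i \<ge> 1" "t \<in> wsits i"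
    and P: "\<forall>\<xi>\<in>paths. through \<xi> t \<longrightarrow>
      (\<forall>\<^sub>F n in sequentially. a + capital P (prefix \<xi> n) - capital P t \<ge> Xvar i \<xi>)"
  shows "2 * a \<ge> 1 - cnt t N / 2^N"
proof -
  have st: "set t \<subseteq> {-1,1}" "sum_list t = 0" using wsits_setting[OF i] by auto
  have pt: "a + capital P (t@ys) - capital P t \<ge> GG (length t) (t@ys) - (if fe (length t) (t@ys) = None then 1 else 0)"
    if ys: "ys \<in> Ls N" for ys
  proof -
    define u where "u = t@ys"
    have su: "set u \<subseteq> {-1,1}" using st ys by (auto simp: u_def Ls_def)
    define \<eta> where "\<eta> = gpath P u"
    have eta: "\<eta> \<in> paths" using gpath_paths[OF su] by (simp add: \<eta>_def)
    have pu: "prefix \<eta> (length u) = u" using prefix_gpath[of P u 0] by (simp add: \<eta>_def)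
    have th: "through \<eta> t"
      using take_prefix[of "length t" "length u" \<eta>] pu by (simp add: through_def u_def)
    from P eta th obtain n0 where n0: "\<forall>n\<ge>n0. a + capital P (prefix \<eta> n) - capital P t \<ge> Xvar i \<eta>"
      by (auto simp: eventually_sequentially)
    have "a + capital P (prefix \<eta> (length u + n0)) - capital P t \<ge> Xvar i \<eta>"
      using n0 by simp
    moreover have "capital P (prefix \<eta> (length u + n0)) \<le> capital P u"
      using cap_gr prefix_gpath by (simp add: \<eta>_def)
    ultimately have X: "a + capital P u - capital P t \<ge> Xvar i \<eta>" by simp
    show ?thesis
    proof (cases "fe (length t) u")
      case None
      then show ?thesis using X Xvar_ge0[of i \<eta>] by (simp add: u_def GG_def)
    next
      case (Some n)
      then show ?thesis using X Xvar_GG[OF i eta th pu Some] by (simp add: u_def)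
    qed
  qed
  have "(\<Sum>ys\<in>Ls N. GG (length t) (t@ys) - (if fe (length t) (t@ys) = None then 1 else 0))
      \<le> (\<Sum>ys\<in>Ls N. a + capital P (t@ys) - capital P t)"
    by (rule sum_mono) (rule pt)
  also have "\<dots> = 2^N * a"
    by (simp add: sum_subtractf sum.distrib sum_capital card_Ls)
  finally have "(\<Sum>ys\<in>Ls N. GG (length t) (t@ys)) - cnt t N \<le> 2^N * a"
    by (simp add: sum_subtractf cnt_def)
  then have "2^N - cnt t N \<le> 2 * 2^N * a" using sum_GG[OF st(2), of N] by simp
  then show ?thesis by (simp add: field_simps)
qed

lemma upper_bd:
  assumes i: "i \<ge> 1" "t \<in> wsits i"
  shows "\<exists>P. \<forall>\<xi>\<in>paths. through \<xi> t \<longrightarrow>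
      (\<forall>\<^sub>F n in sequentially. (1 + cnt t N / 2^N) / 2 + capital P (prefix \<xi> n) - capital P t \<ge> Xvar i \<xi>)"
proof -
  have st: "set t \<subseteq> {-1,1}" "sum_list t = 0" using wsits_setting[OF i] by auto
  define m where "m = length t"
  define G where "G = GG m"
  define a where "a = V G N t"
  have a: "a = (1 + cnt t N / 2^N) / 2"
    using sum_GG[OF st(2), of N] by (simp add: a_def V_def G_def m_def field_simps)
  define P where "P = rep G (m+N)"
  have "\<forall>\<xi>\<in>paths. through \<xi> t \<longrightarrow>
      (\<forall>\<^sub>F n in sequentially. a + capital P (prefix \<xi> n) - capital P t \<ge> Xvar i \<xi>)"
  proof (intro ballI impI)
    fix \<xi> assume xi: "\<xi> \<in> paths" "through \<xi> t"
    define w where "w = prefix \<xi> (m+N)"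
    define ys where "ys = drop m w"
    have w: "w = t @ ys" "ys \<in> Ls N"
      using prefix_split[OF xi, of "m+N"] by (simp_all add: w_def ys_def m_def)
    have cw: "capital P w - capital P t = G w - a"
      using rep_cap[of ys t "m+N" G] w by (simp add: Ls_def m_def V_0 a_def P_def)
    have Xw: "Xvar i \<xi> \<le> G w"
      using Xvar_le_GG[OF i xi, of w] by (simp add: w_def G_def m_def)
    show "\<forall>\<^sub>F n in sequentially. a + capital P (prefix \<xi> n) - capital P t \<ge> Xvar i \<xi>"
      unfolding eventually_sequentially
    proof (intro exI allI impI)
      fix n assume n: "m + N \<le> n"
      obtain zs where "prefix \<xi> n = w @ zs" using prefix_append_ex[OF n] by (auto simp: w_def)
      then have "capital P (prefix \<xi> n) = capital P w"
        using rep_const[of "m+N" w G zs] by (simp add: w_def P_def)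
      then show "a + capital P (prefix \<xi> n) - capital P t \<ge> Xvar i \<xi>" using cw Xw by simp
    qed
  qed
  then show ?thesis using a by blast
qed




definition cnt1 :: "int list \<Rightarrow> nat" where
  "cnt1 ys = length (filter (\<lambda>z. z = 1) ys)"

lemma sum_cnt1: "set ys \<subseteq> {-1,1} \<Longrightarrow> sum_list ys = 2 * int (cnt1 ys) - int (length ys)"
  by (induction ys) (auto simp: cnt1_def)

lemma cnt1_le: "cnt1 ys \<le> length ys"
  by (simp add: cnt1_def)

lemma count_cnt1: "(\<Sum>ys\<in>Ls M. if cnt1 ys = c then 1 else 0 :: real) = real (M choose c)"
proof (induction M arbitrary: c)
  case 0
  then show ?case by (simp add: Ls_0 cnt1_def)
next
  case (Suc M)
  have "(\<Sum>ys\<in>Ls (Suc M). if cnt1 ys = c then 1 else 0 :: real) =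
     (\<Sum>ys\<in>Ls M. (if cnt1 ys = c then 1 else 0) + (if Suc (cnt1 ys) = c then 1 else 0 :: real))"
    by (subst sum_Ls_Suc) (simp add: cnt1_def add.commute)
  also have "\<dots> = real (M choose c) + (\<Sum>ys\<in>Ls M. if Suc (cnt1 ys) = c then 1 else 0 :: real)"
    by (simp add: sum.distrib Suc.IH)
  also have "\<dots> = real (Suc M choose c)"
  proof (cases c)
    case 0
    then show ?thesis by simp
  next
    case (Suc c')
    then show ?thesis using Suc.IH[of c'] by simp
  qed
  finally show ?case .
qed

lemma sum_fun_cnt1:
  "(\<Sum>ys\<in>Ls M. f (cnt1 ys) :: real) = (\<Sum>c\<le>M. real (M choose c) * f c)"
proof -
  have "(\<Sum>ys\<in>Ls M. f (cnt1 ys)) = (\<Sum>ys\<in>Ls M. \<Sum>c\<le>M. (if cnt1 ys = c then 1 else 0) * f c)"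
  proof (intro sum.cong refl)
    fix ys assume "ys \<in> Ls M"
    then have "cnt1 ys \<le> M" using cnt1_le by (auto simp: Ls_def)
    have "(\<Sum>c\<le>M. (if cnt1 ys = c then 1 else 0) * f c) = (\<Sum>c\<le>M. if cnt1 ys = c then f c else 0)"
      by (intro sum.cong) auto
    then show "f (cnt1 ys) = (\<Sum>c\<le>M. (if cnt1 ys = c then 1 else 0) * f c)"
      using \<open>cnt1 ys \<le> M\<close> by (simp add: sum.delta')
  qed
  also have "\<dots> = (\<Sum>c\<le>M. \<Sum>ys\<in>Ls M. (if cnt1 ys = c then 1 else 0) * f c)"
    by (rule sum.swap)
  also have "\<dots> = (\<Sum>c\<le>M. real (M choose c) * f c)"
    by (simp add: sum_distrib_right[symmetric] count_cnt1)
  finally show ?thesis .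
qed

lemma card_window:
  fixes x :: int and r :: real
  assumes "r \<ge> 0"
  shows "real (card {c\<in>{..M}. \<bar>real_of_int x + 2 * real c - real M\<bar> \<le> r}) \<le> r + 1"
proof (cases "{c\<in>{..M}. \<bar>real_of_int x + 2 * real c - real M\<bar> \<le> r} = {}")
  case True
  then show ?thesis using assms by (metis card.empty of_nat_0 add_nonneg_nonneg zero_le_one)
next
  case False
  define A where "A = {c\<in>{..M}. \<bar>real_of_int x + 2 * real c - real M\<bar> \<le> r}"
  have fin: "finite A" by (simp add: A_def)
  define c0 where "c0 = Min A"
  have ne: "A \<noteq> {}" using False by (simp add: A_def)
  have c0A: "c0 \<in> A" unfolding c0_def by (rule Min_in[OF fin ne])
  have sub: "A \<subseteq> {c0..c0 + nat \<lfloor>r\<rfloor>}"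
  proof
    fix c assume c: "c \<in> A"
    have "c0 \<le> c" using c fin by (simp add: c0_def)
    moreover have "real c - real c0 \<le> r" using c c0A by (auto simp: A_def)
    then have "int c - int c0 \<le> \<lfloor>r\<rfloor>" by (simp add: le_floor_iff)
    ultimately show "c \<in> {c0..c0 + nat \<lfloor>r\<rfloor>}" by auto
  qed
  have "card A \<le> card {c0..c0 + nat \<lfloor>r\<rfloor>}" by (rule card_mono[OF _ sub]) simp
  also have "\<dots> = nat \<lfloor>r\<rfloor> + 1" by simp
  finally have "real (card A) \<le> real (nat \<lfloor>r\<rfloor>) + 1" by linarith
  also have "real (nat \<lfloor>r\<rfloor>) \<le> r" using assms by linarith
  finally show ?thesis by (simp add: A_def)
qed

lemma central_even: "real ((2*k) choose k)^2 * (3*k+1) \<le> 16^k"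
proof (induction k)
  case 0
  then show ?case by simp
next
  case (Suc k)
  define c where "c = real ((2*k) choose k)"
  define b1 where "b1 = real (Suc (2*k) choose k)"
  define c' where "c' = real (Suc (Suc (2*k)) choose Suc k)"
  have c'2: "real ((2*Suc k) choose Suc k) = c'"
    unfolding c'_def by (simp del: binomial_Suc_Suc)
  have r1: "real (Suc k) * c' = real (Suc (Suc (2*k))) * b1"
    unfolding c'_def b1_def by (metis Suc_times_binomial of_nat_mult)
  have r3: "Suc (2*k) choose Suc k = Suc (2*k) choose k"
    using central_binomial_odd[of "Suc (2*k)"] by (simp del: binomial_Suc_Suc)
  have r2: "real (Suc (2*k)) * c = b1 * real (Suc k)"
    unfolding c_def b1_def using Suc_times_binomial_eq[of "2*k" k] r3 by (metis of_nat_mult)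
  have e: "real (Suc k) * c' = 2 * (2 * real k + 1) * c"
  proof -
    have "real (Suc k) * c' = 2 * (real k + 1) * b1" using r1 by simp
    also have "(real k + 1) * b1 = (2 * real k + 1) * c" using r2 by (simp add: algebra_simps)
    then have "2 * (real k + 1) * b1 = 2 * (2 * real k + 1) * c" by (metis mult.assoc)
    finally show ?thesis .
  qed
  have c0: "c \<ge> 0" by (simp add: c_def)
  have poly: "(2 * real k + 1)^2 * (3 * real k + 4) \<le> 4 * (real k + 1)^2 * (3 * real k + 1)"
    by (simp add: power2_eq_square algebra_simps)
  have "(real (Suc k))^2 * (c'^2 * (3 * real k + 4)) = (real (Suc k) * c')^2 * (3 * real k + 4)"
    by (simp add: power_mult_distrib)
  also have "\<dots> = 4 * c^2 * ((2 * real k + 1)^2 * (3 * real k + 4))"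
    unfolding e by (simp add: power_mult_distrib power2_eq_square algebra_simps)
  also have "\<dots> \<le> 4 * c^2 * (4 * (real k + 1)^2 * (3 * real k + 1))"
    by (intro mult_left_mono poly) simp
  also have "\<dots> = 16 * (real k + 1)^2 * (c^2 * (3 * real k + 1))"
    by (simp add: algebra_simps)
  also have "\<dots> \<le> 16 * (real k + 1)^2 * 16^k"
  proof -
    have ih: "c^2 * (3 * real k + 1) \<le> 16^k" using Suc.IH by (simp add: c_def add.commute)
    show ?thesis by (intro mult_left_mono ih) simp
  qed
  also have "\<dots> = (real (Suc k))^2 * 16^Suc k"
    by simp
  finally have "(real (Suc k))^2 * (c'^2 * (3 * real k + 4)) \<le> (real (Suc k))^2 * 16^Suc k" .
  then have "c'^2 * (3 * real k + 4) \<le> 16^Suc k"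
    by (rule mult_left_le_imp_le) simp
  then show ?case unfolding c'2 by (simp add: algebra_simps)
qed




lemma pow4_even: "(4::real)^(2*k) = 16^k"
  by (simp add: power_mult)

lemma central_bound: "real (M choose (M div 2))^2 * (3*M+1) \<le> 2 * 4^M"
proof (cases "even M")
  case True
  then obtain k where M: "M = 2*k" by blast
  define C where "C = real ((2*k) choose k)"
  have d: "M div 2 = k" using M by simp
  have ce: "C^2 * (3*real k+1) \<le> 16^k" using central_even[of k] unfolding C_def by (simp add: add.commute)
  have C0: "C^2 \<ge> 0" by simp
  have "C^2 * (3*real M+1) \<le> 2 * (C^2 * (3*real k+1))"
    using C0 M by (simp add: algebra_simps)
  also have "\<dots> \<le> 2 * 16^k" using ce by simp
  also have "(16::real)^k = 4^M" using M pow4_even by simp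
  finally show ?thesis unfolding C_def d using M by (simp add: add.commute)
next
  case False
  then obtain k where M: "M = Suc (2*k)" by (metis oddE Suc_eq_plus1)
  have d: "M div 2 = k" using M by simp
  define C where "C = real (Suc (2*k) choose k)"
  have b1: "Suc (Suc (2*k)) choose Suc k = (Suc (2*k) choose k) + (Suc (2*k) choose Suc k)"
    by (rule binomial_Suc_Suc)
  have r3: "Suc (2*k) choose Suc k = Suc (2*k) choose k"
    using central_binomial_odd[of "Suc (2*k)"] by (simp del: binomial_Suc_Suc)
  have tw: "2*Suc k = Suc (Suc (2*k))" by simp
  have e: "real ((2*Suc k) choose Suc k) = 2 * C"
    unfolding tw C_def using b1 r3 by simp
  have ce: "real ((2*Suc k) choose Suc k)^2 * (3*Suc k+1) \<le> 16^Suc k" by (rule central_even)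
  then have "(2*C)^2 * (3*real k+4) \<le> 16 * 16^k" unfolding e by (simp add: algebra_simps)
  then have h: "C^2 * (3*real k+4) \<le> 4 * 16^k" by (simp add: power_mult_distrib)
  have C0: "C^2 \<ge> 0" by simp
  have "C^2 * (3*real M+1) \<le> 2 * (C^2 * (3*real k+4))"
    using C0 M by (simp add: algebra_simps)
  also have "\<dots> \<le> 2 * (4 * 16^k)" using h by simp
  also have "(4::real) * 16^k = 4^M" using M pow4_even by simp
  finally show ?thesis unfolding C_def d using M by (simp add: add.commute)
qed




lemma anti_conc:
  fixes x :: int and r :: real
  assumes "r \<ge> 0"
  shows "(\<Sum>ys\<in>Ls M. if \<bar>real_of_int (x + sum_list ys)\<bar> \<le> r then 1 else 0 :: real)
     \<le> (r + 1) * real (M choose (M div 2))"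
proof -
  define f where "f c = (if \<bar>real_of_int x + 2 * real c - real M\<bar> \<le> r then 1 else 0 :: real)" for c
  have "(\<Sum>ys\<in>Ls M. if \<bar>real_of_int (x + sum_list ys)\<bar> \<le> r then 1 else 0 :: real)
      = (\<Sum>ys\<in>Ls M. f (cnt1 ys))"
  proof (intro sum.cong refl)
    fix ys assume "ys \<in> Ls M"
    then have "sum_list ys = 2 * int (cnt1 ys) - int M" using sum_cnt1 by (auto simp: Ls_def)
    then show "(if \<bar>real_of_int (x + sum_list ys)\<bar> \<le> r then 1 else 0) = f (cnt1 ys)"
      by (simp add: f_def add_diff_eq)
  qed
  also have "\<dots> = (\<Sum>c\<le>M. real (M choose c) * f c)" by (rule sum_fun_cnt1)
  also have "\<dots> \<le> (\<Sum>c\<le>M. real (M choose (M div 2)) * f c)"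
    by (intro sum_mono mult_right_mono) (simp_all add: binomial_maximum f_def)
  also have "\<dots> = real (M choose (M div 2)) * (\<Sum>c\<le>M. f c)"
    by (simp add: sum_distrib_left)
  also have "(\<Sum>c\<le>M. f c) = real (card {c\<in>{..M}. \<bar>real_of_int x + 2 * real c - real M\<bar> \<le> r})"
    by (simp add: f_def sum.inter_filter[symmetric])
  also have "real (M choose (M div 2)) * \<dots> \<le> real (M choose (M div 2)) * (r + 1)"
    by (intro mult_left_mono card_window assms) simp
  finally show ?thesis by (metis mult.commute)
qed




lemma pow2sq: "((2::real)^n)^2 = 4^n"
proof -
  have "((2::real)^n)^2 = (2^2)^n" by (simp only: power_mult[symmetric] mult.commute)
  then show ?thesis by simp
qed

lemma numbers_bd:
  fixes K :: nat
  assumes "K \<ge> 1"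
  shows "(sqrt (real (100*K)) + 1) * real ((99*K) choose ((99*K) div 2)) \<le> 19/20 * 2^(99*K)"
proof -
  define C where "C = real ((99*K) choose ((99*K) div 2))"
  define Mx where "Mx = (4::real)^(99*K)"
  have cb0: "C^2 * (3 * real (99*K) + 1) \<le> 2 * Mx"
    unfolding C_def Mx_def using central_bound[of "99*K"] by (simp add: add.commute)
  have cb: "C^2 * (297 * real K + 1) \<le> 2 * Mx" using cb0 by simp
  define sk where "sk = sqrt (real K)"
  have sK: "sqrt (real (100*K)) = 10 * sk"
    unfolding sk_def by (simp add: real_sqrt_mult)
  have K1: "real K \<ge> 1" using assms by simp
  have s1: "sk \<ge> 1" unfolding sk_def using K1 by simp
  have ss: "sk * sk = real K" unfolding sk_def by simp
  have sqle: "sk \<le> real K" using s1 ss by (metis mult_right_mono mult_1_left zero_le_one order.trans)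
  have "(sqrt (real (100*K)) + 1)^2 = 100 * (sk * sk) + 20 * sk + 1"
    unfolding sK by (simp add: power2_eq_square algebra_simps)
  also have "\<dots> \<le> 121 * real K" using sqle K1 ss by simp
  finally have a: "(sqrt (real (100*K)) + 1)^2 \<le> 121 * real K" .
  have "297 * (real K * C^2) \<le> C^2 * (297 * real K + 1)" by (simp add: algebra_simps)
  then have b: "real K * C^2 \<le> 2 * Mx / 297" using cb by simp
  have "((sqrt (real (100*K)) + 1) * C)^2 = (sqrt (real (100*K)) + 1)^2 * C^2"
    by (simp add: power_mult_distrib)
  also have "\<dots> \<le> 121 * real K * C^2" using a by (intro mult_right_mono) simp_all
  also have "\<dots> \<le> 121 * (2 * Mx / 297)" using b by simp
  also have "\<dots> \<le> 361/400 * Mx" proof - have "Mx \<ge> 0" unfolding Mx_def by simp then show ?thesis by simp qed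
  also have "\<dots> = (19/20)^2 * ((2::real)^(99*K))^2"
    unfolding pow2sq Mx_def by (simp add: power2_eq_square)
  also have "\<dots> = (19/20 * 2^(99*K))^2"
    by (simp only: power_mult_distrib)
  finally have "((sqrt (real (100*K)) + 1) * C)^2 \<le> (19/20 * 2^(99*K))^2" .
  then show ?thesis unfolding C_def by (rule power2_le_imp_le) simp
qed




definition Kt :: "nat \<Rightarrow> nat \<Rightarrow> nat" where "Kt m j = 100^j * m"

definition Phi :: "nat \<Rightarrow> nat \<Rightarrow> int list \<Rightarrow> real" where
  "Phi m J ys = (if \<forall>j\<in>{1..J}. \<bar>real_of_int (sum_list (take (Kt m j - m) ys))\<bar> \<le> sqrt (real (Kt m j)) then 1 else 0)"

lemma Kt_mono: "j \<le> J \<Longrightarrow> Kt m j \<le> Kt m J"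
  unfolding Kt_def by (intro mult_right_mono power_increasing) simp_all

lemma Kt_ge: "Kt m j \<ge> m"
  using Kt_mono[of 0 j m] by (simp add: Kt_def)

lemma Phi_nonneg: "Phi m J ys \<ge> 0" by (simp add: Phi_def)

lemma Phi_step:
  assumes "ys1 \<in> Ls (Kt m J - m)" "ys2 \<in> Ls (99 * Kt m J)"
  shows "Phi m (Suc J) (ys1@ys2) \<le> Phi m J ys1 *
     (if \<bar>real_of_int (sum_list ys1 + sum_list ys2)\<bar> \<le> sqrt (real (100 * Kt m J)) then 1 else 0)"
proof (cases "Phi m (Suc J) (ys1@ys2) = 0")
  case True
  then show ?thesis using Phi_nonneg[of m J ys1] by simp
next
  case False
  then have h: "\<forall>j\<in>{1..Suc J}. \<bar>real_of_int (sum_list (take (Kt m j - m) (ys1@ys2)))\<bar> \<le> sqrt (real (Kt m j))"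
    by (simp add: Phi_def split: if_splits)
  have l1: "length ys1 = Kt m J - m" "length ys2 = 99 * Kt m J" using assms by (auto simp: Ls_def)
  have "\<forall>j\<in>{1..J}. \<bar>real_of_int (sum_list (take (Kt m j - m) ys1))\<bar> \<le> sqrt (real (Kt m j))"
  proof
    fix j assume j: "j \<in> {1..J}"
    then have "Kt m j - m \<le> length ys1" using Kt_mono[of j J m] l1 by simp
    then have "take (Kt m j - m) (ys1@ys2) = take (Kt m j - m) ys1" by simp
    then show "\<bar>real_of_int (sum_list (take (Kt m j - m) ys1))\<bar> \<le> sqrt (real (Kt m j))"
      using h j by (metis atLeastAtMost_iff le_SucI)
  qed
  then have p1: "Phi m J ys1 = 1" by (simp add: Phi_def)
  have KS: "Kt m (Suc J) = 100 * Kt m J" by (simp add: Kt_def)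
  have "Kt m (Suc J) - m = length (ys1@ys2)" using l1 KS Kt_ge[of m J] by simp
  then have "\<bar>real_of_int (sum_list (ys1@ys2))\<bar> \<le> sqrt (real (Kt m (Suc J)))"
    using h by (metis atLeastAtMost_iff le_refl Suc_le_mono le0 take_all order_refl Suc_eq_plus1 le_add2)
  then show ?thesis using p1 KS Phi_nonneg by (simp add: Phi_def)
qed

lemma chain_bound:
  assumes "m \<ge> 1"
  shows "(\<Sum>ys\<in>Ls (Kt m J - m). Phi m J ys) \<le> (19/20)^J * 2^(Kt m J - m)"
proof (induction J)
  case 0
  then show ?case by (simp add: Kt_def Ls_0 Phi_def)
next
  case (Suc J)
  define N where "N = Kt m J - m"
  define K where "K = Kt m J"
  define M where "M = 99 * K"
  have K1: "K \<ge> 1" using Kt_ge[of m J] assms by (simp add: K_def)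
  have NM: "Kt m (Suc J) - m = N + M" using Kt_ge[of m J] by (simp add: N_def M_def K_def Kt_def algebra_simps)
  define ind where "ind ys1 ys2 = (if \<bar>real_of_int (sum_list ys1 + sum_list ys2)\<bar> \<le> sqrt (real (100 * K)) then 1 else 0 :: real)" for ys1 ys2
  have "(\<Sum>ys\<in>Ls (Kt m (Suc J) - m). Phi m (Suc J) ys) = (\<Sum>ys1\<in>Ls N. \<Sum>ys2\<in>Ls M. Phi m (Suc J) (ys1@ys2))"
    unfolding NM by (rule sum_Ls_append)
  also have "\<dots> \<le> (\<Sum>ys1\<in>Ls N. \<Sum>ys2\<in>Ls M. Phi m J ys1 * ind ys1 ys2)"
  proof (intro sum_mono)
    fix ys1 ys2 assume y: "ys1 \<in> Ls N" "ys2 \<in> Ls M"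
    show "Phi m (Suc J) (ys1@ys2) \<le> Phi m J ys1 * ind ys1 ys2"
      unfolding ind_def K_def by (rule Phi_step) (use y in \<open>simp_all add: N_def M_def K_def\<close>)
  qed
  also have "\<dots> = (\<Sum>ys1\<in>Ls N. Phi m J ys1 * (\<Sum>ys2\<in>Ls M. ind ys1 ys2))"
    by (simp add: sum_distrib_left)
  also have "\<dots> \<le> (\<Sum>ys1\<in>Ls N. Phi m J ys1 * (19/20 * 2^M))"
  proof (intro sum_mono mult_left_mono Phi_nonneg)
    fix ys1
    have "(\<Sum>ys2\<in>Ls M. ind ys1 ys2) \<le> (sqrt (real (100*K)) + 1) * real (M choose (M div 2))"
      unfolding ind_def by (rule anti_conc) simp
    also have "\<dots> \<le> 19/20 * 2^M" unfolding M_def by (rule numbers_bd[OF K1])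
    finally show "(\<Sum>ys2\<in>Ls M. ind ys1 ys2) \<le> 19/20 * 2^M" .
  qed
  also have "\<dots> = (19/20 * 2^M) * (\<Sum>ys1\<in>Ls N. Phi m J ys1)"
    by (metis (no_types) sum_distrib_right mult.commute)
  also have "\<dots> \<le> (19/20 * 2^M) * ((19/20)^J * 2^N)"
    using Suc.IH by (intro mult_left_mono) (simp_all add: N_def)
  also have "\<dots> = (19/20)^Suc J * 2^(Kt m (Suc J) - m)"
    unfolding NM by (simp add: power_add)
  finally show ?case .
qed

lemma cnt_bound:
  assumes "sum_list t = 0" "length t = m" "m \<ge> 1"
  shows "cnt t (Kt m J - m) \<le> (19/20)^J * 2^(Kt m J - m)"
proof -
  have "cnt t (Kt m J - m) \<le> (\<Sum>ys\<in>Ls (Kt m J - m). Phi m J ys)"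
    unfolding cnt_def
  proof (intro sum_mono)
    fix ys assume ys: "ys \<in> Ls (Kt m J - m)"
    show "(if fe (length t) (t @ ys) = None then 1 else 0) \<le> Phi m J ys"
    proof (cases "fe (length t) (t @ ys) = None")
      case True
      then have no: "\<forall>n>m. \<not> (n \<le> length (t@ys) \<and> exl (t@ys) n)"
        using assms by (simp add: fe_def first_after_None)
      have len: "length (t@ys) = Kt m J" using ys assms Kt_ge[of m J] by (auto simp: Ls_def)
      have "\<forall>j\<in>{1..J}. \<bar>real_of_int (sum_list (take (Kt m j - m) ys))\<bar> \<le> sqrt (real (Kt m j))"
      proof
        fix j assume j: "j \<in> {1..J}"
        have gt: "Kt m j > m"
        proof -
          have "100^j \<ge> (100::nat)" using j by (simp add: self_le_power)
          then have "100^j * m \<ge> 100 * m" by simp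
          then show ?thesis using assms(3) by (simp add: Kt_def)
        qed
        have le: "Kt m j \<le> length (t@ys)" using len Kt_mono[of j J m] j by simp
        have "\<not> exl (t@ys) (Kt m j)" using no gt le by blast
        then have "\<bar>real_of_int (sum_list (take (Kt m j) (t@ys)))\<bar> \<le> sqrt (real (Kt m j)) - 1"
          by (simp add: exl_def)
        moreover have "sum_list (take (Kt m j) (t@ys)) = sum_list (take (Kt m j - m) ys)"
          using gt assms by simp
        ultimately show "\<bar>real_of_int (sum_list (take (Kt m j - m) ys))\<bar> \<le> sqrt (real (Kt m j))"
          by simp
      qed
      then show ?thesis using True by (simp add: Phi_def)
    next
      case False
      have "(if fe (length t) (t @ ys) = None then 1 else 0) = (0::real)" by (rule if_not_P[OF False])
      then show ?thesis using Phi_nonneg[of m J ys] by simp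
    qed
  qed
  also have "\<dots> \<le> (19/20)^J * 2^(Kt m J - m)" by (rule chain_bound[OF assms(3)])
  finally show ?thesis .
qed

lemma small_cnt:
  assumes "sum_list t = 0" "length t \<ge> 1" "e > 0"
  shows "\<exists>N. cnt t N / 2^N < e"
proof -
  obtain J where J: "(19/20::real)^J < e" using real_arch_pow_inv[OF assms(3), of "19/20"] by auto
  define N where "N = Kt (length t) J - length t"
  have "cnt t N \<le> (19/20)^J * 2^N"
    unfolding N_def by (rule cnt_bound[OF assms(1) refl assms(2)])
  then have "cnt t N / 2^N \<le> (19/20)^J" by (simp add: field_simps)
  then have "cnt t N / 2^N < e" using J by linarith
  then show ?thesis by blast
qed

lemma length_t:
  assumes "i \<ge> 1" "t \<in> wsits i"
  shows "length t \<ge> 1"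
proof -
  from assms(2) obtain \<xi> M where xi: "wstop \<xi> i = Some M" and t: "t = prefix \<xi> M"
    by (auto simp: wsits_def)
  from xi assms(1) obtain a0 where "first_after a0 (zero_cond \<xi>) = Some M"
    by (auto simp: wstop_def bind_eq_Some_conv split: if_splits)
  then have "M > a0" by (simp add: first_after_Some)
  then show ?thesis using t by simp
qed

theorem mainTheorem12:
  fixes i :: nat and t :: "int list"
  assumes "i \<ge> 1" and "t \<in> wsits i"
  shows "upper_price t (Xvar i) = ereal (1/2)"
proof -
  have st: "sum_list t = 0" using wsits_setting[OF assms] by auto
  have lt: "length t \<ge> 1" by (rule length_t[OF assms])
  define T where "T = {a. \<exists>P. \<forall>\<xi>\<in>paths. through \<xi> t \<longrightarrow>
      (\<forall>\<^sub>F n in sequentially. a + capital P (prefix \<xi> n) - capital P t \<ge> Xvar i \<xi>)}"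
  have up: "upper_price t (Xvar i) = Inf (ereal ` T)" by (simp add: upper_price_def T_def)
  have lowT: "a \<ge> 1/2" if a: "a \<in> T" for a
  proof (rule ccontr)
    assume "\<not> a \<ge> 1/2"
    then have e: "1 - 2*a > 0" by simp
    obtain N where N: "cnt t N / 2^N < 1 - 2*a" using small_cnt[OF st lt e] by blast
    from a obtain P where P: "\<forall>\<xi>\<in>paths. through \<xi> t \<longrightarrow>
      (\<forall>\<^sub>F n in sequentially. a + capital P (prefix \<xi> n) - capital P t \<ge> Xvar i \<xi>)"
      by (auto simp: T_def)
    have "2 * a \<ge> 1 - cnt t N / 2^N" by (rule lower_bd[OF assms P])
    then show False using N by simp
  qed
  have ge: "ereal (1/2) \<le> Inf (ereal ` T)"
    by (rule Inf_greatest) (use lowT in auto)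
  have le: "Inf (ereal ` T) \<le> ereal (1/2)"
  proof (rule ereal_le_epsilon2)
    fix e :: real assume e: "e > 0"
    then have "2*e > 0" by simp
    obtain N where N: "cnt t N / 2^N < 2*e" using small_cnt[OF st lt \<open>2*e > 0\<close>] by blast
    have "(1 + cnt t N / 2^N) / 2 \<in> T"
      using upper_bd[OF assms, of N] by (simp add: T_def)
    then have "Inf (ereal ` T) \<le> ereal ((1 + cnt t N / 2^N) / 2)"
      by (intro Inf_lower imageI)
    also have "\<dots> \<le> ereal (1/2) + ereal e" using N by simp
    finally show "Inf (ereal ` T) \<le> ereal (1/2) + ereal e" .
  qed
  show ?thesis using up ge le by simp
qed


end
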